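(* Let $0<\beta<1$, let $B\subset\mathbf{C}^2$ be a ball around the origin with coordinates $(z_1,z_2)$, and let $\omega$ be a smooth Kähler metric on $B\setminus\{z_1=0\}$. Assume that $$\omega=\eta+i\partial\bar\partial\big(F|z_1|^{2\beta}\big),$$ where $\eta$ is a smooth real $(1,1)$-form on $B$ with $\eta(\partial/\partial z_2,\partial/\partial\bar z_2)>0$ along $\{z_1=0\}$, and $F$ is a smooth positive function on $B$. Then $\omega$ has standard cone singularities of angle $2\pi\beta$ along $\{z_1=0\}$ in a neighbourhood of the origin.
   Context: Standard cone singularities of angle $2\pi\beta$ along $\{z_1=0\}$ (Donaldson's sense): at each point $p$ of $\{z_1=0\}$, after a linear change of coordinates $\tilde z_1=az_1$, $\tilde z_2=bz_2$ with constants $a,b>0$ (centred at $p$), $\omega=\beta^2|\tilde z_1|^{2\beta-2}i\,d\tilde z_1\wedge d\bar{\tilde z}_1+i\,d\tilde z_2\wedge d\bar{\tilde z}_2+\sigma$, where $\sigma$ is a $(1,1)$-form whose components with respect to the coframe $\{v_i\wedge\bar v_j\}$, $v_1=|\tilde z_1|^{\beta-1}d\tilde z_1$, $v_2=d\tilde z_2$, are Hölder continuous and vanish at $p$. *)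

theory Defs
  imports "HOL-Analysis.Analysis"
begin

text \<open>Points of C^2 are vectors z :: complex^2 with coordinates z$1, z$2.
  Smoothness means C-infinity in the underlying real variables.\<close>

fun Ck_on :: "nat \<Rightarrow> 'a::real_normed_vector set \<Rightarrow> ('a \<Rightarrow> 'b::real_normed_vector) \<Rightarrow> bool" where
  "Ck_on 0 S f = continuous_on S f"
| "Ck_on (Suc k) S f = (f differentiable_on S \<and> continuous_on S f \<and>
      (\<forall>v. Ck_on k S (\<lambda>z. frechet_derivative f (at z) v)))"

definition smooth_on :: "'a::real_normed_vector set \<Rightarrow> ('a \<Rightarrow> 'b::real_normed_vector) \<Rightarrow> bool" where
  "smooth_on S f = (\<forall>k. Ck_on k S f)"

definition dz :: "2 \<Rightarrow> (complex^2 \<Rightarrow> complex) \<Rightarrow> complex^2 \<Rightarrow> complex" where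
  "dz j f z = (frechet_derivative f (at z) (axis j 1) - \<i> * frechet_derivative f (at z) (axis j \<i>)) / 2"

definition dzbar :: "2 \<Rightarrow> (complex^2 \<Rightarrow> complex) \<Rightarrow> complex^2 \<Rightarrow> complex" where
  "dzbar j f z = (frechet_derivative f (at z) (axis j 1) + \<i> * frechet_derivative f (at z) (axis j \<i>)) / 2"

text \<open>A real (1,1)-form \<omega> = i \<Sum>_{j,k} H_{jk} dz_j \<and> d(conj z_k) on C^2 is represented by its
  coefficient matrix field H.\<close>
definition ddbar_coeff :: "(complex^2 \<Rightarrow> complex) \<Rightarrow> complex^2 \<Rightarrow> complex^2^2" where
  "ddbar_coeff u z = (\<chi> j k. dz j (dzbar k u) z)"

definition smooth_real_11_form_on :: "(complex^2) set \<Rightarrow> (complex^2 \<Rightarrow> complex^2^2) \<Rightarrow> bool" where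
  "smooth_real_11_form_on S H =
     ((\<forall>j k. smooth_on S (\<lambda>z. H z $ j $ k)) \<and>
      (\<forall>z\<in>S. \<forall>j k. H z $ k $ j = cnj (H z $ j $ k)))"

text \<open>Smooth Kaehler metric: smooth real (1,1)-form, positive definite and closed (d\<omega> = 0).\<close>
definition smooth_kaehler_on :: "(complex^2) set \<Rightarrow> (complex^2 \<Rightarrow> complex^2^2) \<Rightarrow> bool" where
  "smooth_kaehler_on S H =
     (smooth_real_11_form_on S H \<and>
      (\<forall>z\<in>S. \<forall>v::complex^2. v \<noteq> 0 \<longrightarrow> Re (\<Sum>j\<in>UNIV. \<Sum>k\<in>UNIV. H z $ j $ k * v $ j * cnj (v $ k)) > 0) \<and>
      (\<forall>z\<in>S. \<forall>j k l. dz l (\<lambda>w. H w $ j $ k) z = dz j (\<lambda>w. H w $ l $ k) z \<and>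
                       dzbar l (\<lambda>w. H w $ j $ k) z = dzbar k (\<lambda>w. H w $ j $ l) z))"

text \<open>Standard cone singularity at a point p with p$1 = 0.  With \<tilde>z_1 = a z_1,
  \<tilde>z_2 = b (z_2 - p$2) (a, b > 0), the coefficients of \<omega> in the \<tilde>z coordinates are
  H_{jk} / (c_j c_k) with c_1 = a, c_2 = b.  The model metric has coefficients
  diag(\<beta>^2 |\<tilde>z_1|^(2\<beta>-2), 1), and the coefficients of \<sigma> = \<omega> - model with respect to
  i v_j \<and> conj v_k, v_1 = |\<tilde>z_1|^(\<beta>-1) d\<tilde>z_1, v_2 = d\<tilde>z_2, are
  (H_{jk}/(c_j c_k) - model_{jk}) w_j w_k with w_1 = |\<tilde>z_1|^(1-\<beta>), w_2 = 1.\<close>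
definition cone_sigma_coeff ::
  "real \<Rightarrow> real \<Rightarrow> real \<Rightarrow> (complex^2 \<Rightarrow> complex^2^2) \<Rightarrow> 2 \<Rightarrow> 2 \<Rightarrow> complex^2 \<Rightarrow> complex" where
  "cone_sigma_coeff \<beta> a b H j k x =
     (let c = (\<lambda>i::2. if i = 1 then a else b);
          r = a * cmod (x $ 1);
          w = (\<lambda>i::2. if i = 1 then r powr (1 - \<beta>) else 1);
          m = (\<lambda>i i'::2. if i = i' then (if i = 1 then \<beta>^2 * r powr (2*\<beta> - 2) else 1) else 0)
      in (H x $ j $ k / complex_of_real (c j * c k) - complex_of_real (m j k))
           * complex_of_real (w j * w k))"

definition standard_cone_at :: "real \<Rightarrow> (complex^2 \<Rightarrow> complex^2^2) \<Rightarrow> complex^2 \<Rightarrow> bool" where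
  "standard_cone_at \<beta> H p =
     (\<exists>a b. a > 0 \<and> b > 0 \<and>
       (\<exists>r>0. \<exists>\<alpha> C. 0 < \<alpha> \<and> \<alpha> < 1 \<and>
          (\<forall>j k. (\<forall>x\<in>ball p r - {z. z $ 1 = 0}. \<forall>y\<in>ball p r - {z. z $ 1 = 0}.
                     cmod (cone_sigma_coeff \<beta> a b H j k x - cone_sigma_coeff \<beta> a b H j k y)
                       \<le> C * dist x y powr \<alpha>) \<and>
                 (cone_sigma_coeff \<beta> a b H j k \<longlongrightarrow> 0) (at p within (ball p r - {z. z $ 1 = 0})))))"

definition standard_cone_near :: "real \<Rightarrow> (complex^2 \<Rightarrow> complex^2^2) \<Rightarrow> complex^2 \<Rightarrow> bool" where
  "standard_cone_near \<beta> H q =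
     (\<exists>U. open U \<and> q \<in> U \<and> (\<forall>p\<in>U. p $ 1 = 0 \<longrightarrow> standard_cone_at \<beta> H p))"

end

theory Submission
  imports Defs
begin

lemma fd_cong:
  assumes "open X" "x \<in> X" "\<And>y. y \<in> X \<Longrightarrow> f y = g y"
  shows "frechet_derivative f (at x) = frechet_derivative g (at x)"
proof -
  have "\<And>D. (f has_derivative D) (at x) = (g has_derivative D) (at x)"
    using assms has_derivative_transform_within_open by metis
  then show ?thesis unfolding frechet_derivative_def by simp
qed

lemma Ck_cong:
  assumes "open S"
  shows "Ck_on k S f \<Longrightarrow> (\<And>x. x \<in> S \<Longrightarrow> f x = g x) \<Longrightarrow> Ck_on k S g"
proof (induction k arbitrary: f g)
  case 0
  then show ?case using continuous_on_cong by auto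
next
  case (Suc k)
  have d: "f differentiable_on S" "continuous_on S f"
    "\<And>v. Ck_on k S (\<lambda>z. frechet_derivative f (at z) v)" using Suc.prems by auto
  have "g differentiable_on S"
    unfolding differentiable_on_eq_differentiable_at[OF assms]
  proof
    fix x assume x: "x \<in> S"
    then have "f differentiable at x" using d(1) differentiable_on_eq_differentiable_at[OF assms] by blast
    then show "g differentiable at x"
      unfolding differentiable_def using has_derivative_transform_within_open[OF _ assms x] Suc.prems(2) by metis
  qed
  moreover have "continuous_on S g" using d(2) Suc.prems(2) continuous_on_cong by auto
  moreover have "Ck_on k S (\<lambda>z. frechet_derivative g (at z) v)" for v
    apply (rule Suc.IH[OF d(3)[of v]])
    using fd_cong[OF assms, of _ f g] Suc.prems(2) by simp
  ultimately show ?case by simp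
qed

lemma Ck_linear:
  assumes "open S" "bounded_linear h"
  shows "Ck_on k S f \<Longrightarrow> Ck_on k S (\<lambda>x. h (f x))"
proof (induction k arbitrary: f)
  case 0
  then show ?case using continuous_on_compose2[OF linear_continuous_on[OF assms(2)]] by auto
next
  case (Suc k)
  have d: "f differentiable_on S" "continuous_on S f"
    "\<And>v. Ck_on k S (\<lambda>z. frechet_derivative f (at z) v)" using Suc.prems by auto
  have fd: "(f has_derivative frechet_derivative f (at x)) (at x)" if "x \<in> S" for x
    using d(1) that assms(1) differentiable_on_eq_differentiable_at frechet_derivative_works by blast
  have hd: "((\<lambda>x. h (f x)) has_derivative (\<lambda>v. h (frechet_derivative f (at x) v))) (at x)"
    if "x \<in> S" for x
    using bounded_linear.has_derivative[OF assms(2) fd[OF that]] .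
  have "(\<lambda>x. h (f x)) differentiable_on S"
    using hd differentiable_on_eq_differentiable_at[OF assms(1)] differentiable_def by blast
  moreover have "continuous_on S (\<lambda>x. h (f x))"
    using d(2) continuous_on_compose2[OF linear_continuous_on[OF assms(2)]] by auto
  moreover have "Ck_on k S (\<lambda>z. frechet_derivative (\<lambda>x. h (f x)) (at z) v)" for v
    apply (rule Ck_cong[OF assms(1) Suc.IH[OF d(3)[of v]]])
    using frechet_derivative_at[OF hd] by metis
  ultimately show ?case by simp
qed

lemma Ck_add:
  assumes "open S"
  shows "Ck_on k S f \<Longrightarrow> Ck_on k S g \<Longrightarrow> Ck_on k S (\<lambda>x. f x + g x)"
proof (induction k arbitrary: f g)
  case 0
  then show ?case using continuous_on_add by auto
next
  case (Suc k)
  have d: "f differentiable_on S" "continuous_on S f"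
    "\<And>v. Ck_on k S (\<lambda>z. frechet_derivative f (at z) v)" using Suc.prems by auto
  have e: "g differentiable_on S" "continuous_on S g"
    "\<And>v. Ck_on k S (\<lambda>z. frechet_derivative g (at z) v)" using Suc.prems by auto
  have fd: "(f has_derivative frechet_derivative f (at x)) (at x)" if "x \<in> S" for x
    using d(1) that assms(1) differentiable_on_eq_differentiable_at frechet_derivative_works by blast
  have gd: "(g has_derivative frechet_derivative g (at x)) (at x)" if "x \<in> S" for x
    using e(1) that assms(1) differentiable_on_eq_differentiable_at frechet_derivative_works by blast
  have hd: "((\<lambda>x. f x + g x) has_derivative (\<lambda>v. frechet_derivative f (at x) v + frechet_derivative g (at x) v)) (at x)"
    if "x \<in> S" for x
    using has_derivative_add[OF fd[OF that] gd[OF that]] .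
  have "(\<lambda>x. f x + g x) differentiable_on S"
    using hd differentiable_on_eq_differentiable_at[OF assms(1)] differentiable_def by blast
  moreover have "continuous_on S (\<lambda>x. f x + g x)"
    using d(2) e(2) continuous_on_add by auto
  moreover have "Ck_on k S (\<lambda>z. frechet_derivative (\<lambda>x. f x + g x) (at z) v)" for v
    apply (rule Ck_cong[OF assms(1) Suc.IH[OF d(3)[of v] e(3)[of v]]])
    using frechet_derivative_at[OF hd] by metis
  ultimately show ?case by simp
qed

lemma smooth_linear: "open S \<Longrightarrow> bounded_linear h \<Longrightarrow> smooth_on S f \<Longrightarrow> smooth_on S (\<lambda>x. h (f x))"
  unfolding smooth_on_def using Ck_linear by blast

lemma smooth_add: "open S \<Longrightarrow> smooth_on S f \<Longrightarrow> smooth_on S g \<Longrightarrow> smooth_on S (\<lambda>x. f x + g x)"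
  unfolding smooth_on_def using Ck_add by blast

lemma smooth_deriv: "smooth_on S f \<Longrightarrow> smooth_on S (\<lambda>z. frechet_derivative f (at z) v)"
  unfolding smooth_on_def by (metis Ck_on.simps(2))

lemma smooth_has_deriv:
  assumes "open S" "smooth_on S f" "x \<in> S"
  shows "(f has_derivative frechet_derivative f (at x)) (at x)"
proof -
  have "f differentiable_on S" using assms(2) unfolding smooth_on_def by (metis Ck_on.simps(2))
  then show ?thesis using assms differentiable_on_eq_differentiable_at frechet_derivative_works by blast
qed

lemma smooth_cont: "smooth_on S f \<Longrightarrow> continuous_on S f"
  unfolding smooth_on_def by (metis Ck_on.simps(1))

lemma smooth_cmult: "open S \<Longrightarrow> smooth_on S f \<Longrightarrow> smooth_on S (\<lambda>x. (c::complex) * f x)"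
  using smooth_linear[of S "\<lambda>x. c * x"] bounded_linear_mult_right by blast

lemma dz_alt: "dz j f = (\<lambda>z. (1/2) * frechet_derivative f (at z) (axis j 1) + (-\<i>/2) * frechet_derivative f (at z) (axis j \<i>))"
  unfolding dz_def by (rule ext) (simp add: field_simps)

lemma dzbar_alt: "dzbar j f = (\<lambda>z. (1/2) * frechet_derivative f (at z) (axis j 1) + (\<i>/2) * frechet_derivative f (at z) (axis j \<i>))"
  unfolding dzbar_def by (rule ext) (simp add: field_simps)

lemma smooth_dz: "open S \<Longrightarrow> smooth_on S f \<Longrightarrow> smooth_on S (dz j f)"
  unfolding dz_alt by (intro smooth_add smooth_cmult smooth_deriv) auto

lemma smooth_dzbar: "open S \<Longrightarrow> smooth_on S f \<Longrightarrow> smooth_on S (dzbar j f)"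
  unfolding dzbar_alt by (intro smooth_add smooth_cmult smooth_deriv) auto

lemma smooth_lip:
  fixes g :: "complex^2 \<Rightarrow> 'b::real_normed_vector"
  assumes "open S" "cball p r \<subseteq> S" "smooth_on S g"
  shows "\<exists>L. \<forall>x\<in>cball p r. \<forall>y\<in>cball p r. norm (g x - g y) \<le> L * dist x y"
proof -
  have "\<exists>M. \<forall>z\<in>cball p r. norm (frechet_derivative g (at z) b) \<le> M" for b
  proof -
    have "continuous_on S (\<lambda>z. frechet_derivative g (at z) b)"
      using smooth_cont[OF smooth_deriv[OF assms(3)]] .
    then have "continuous_on (cball p r) (\<lambda>z. frechet_derivative g (at z) b)"
      using assms(2) continuous_on_subset by blast
    then have "bounded ((\<lambda>z. frechet_derivative g (at z) b) ` cball p r)"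
      using compact_continuous_image compact_imp_bounded compact_cball by blast
    then show ?thesis unfolding bounded_iff by auto
  qed
  then obtain M where M: "\<And>b z. z \<in> cball p r \<Longrightarrow> norm (frechet_derivative g (at z) b) \<le> M b"
    by metis
  have hd: "(g has_derivative frechet_derivative g (at z)) (at z within cball p r)" if "z \<in> cball p r" for z
    using smooth_has_deriv[OF assms(1) assms(3)] that assms(2) has_derivative_at_withinI by blast
  have on: "onorm (frechet_derivative g (at z)) \<le> (\<Sum>b\<in>Basis. M b)" if "z \<in> cball p r" for z
  proof (rule onorm_componentwise_le)
    show "bounded_linear (frechet_derivative g (at z))"
      using smooth_has_deriv[OF assms(1) assms(3)] that assms(2) has_derivative_bounded_linear by blast
    show "(\<Sum>i\<in>Basis. norm (frechet_derivative g (at z) i)) \<le> sum M Basis"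
      by (rule sum_mono) (use M that in auto)
  qed
  show ?thesis
    apply (rule exI[of _ "\<Sum>b\<in>Basis. M b"])
    using differentiable_bound[OF convex_cball hd on] by (simp add: dist_norm)
qed

definition hold :: "complex^2 \<Rightarrow> real \<Rightarrow> real \<Rightarrow> (complex^2 \<Rightarrow> complex) \<Rightarrow> bool" where
  "hold p r \<alpha> f \<longleftrightarrow> (\<exists>B. \<forall>x\<in>cball p r. cmod (f x) \<le> B) \<and>
     (\<exists>C. \<forall>x\<in>cball p r. \<forall>y\<in>cball p r. cmod (f x - f y) \<le> C * dist x y powr \<alpha>)"

lemma hold_const: "hold p r \<alpha> (\<lambda>x. c)"
  unfolding hold_def
  apply (rule conjI)
   apply (rule exI[of _ "cmod c"], simp)
  apply (rule exI[of _ 0], simp)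
  done

lemma hold_add:
  assumes "hold p r \<alpha> f" "hold p r \<alpha> g"
  shows "hold p r \<alpha> (\<lambda>x. f x + g x)"
proof -
  obtain B1 C1 B2 C2 where b: "\<forall>x\<in>cball p r. cmod (f x) \<le> B1" "\<forall>x\<in>cball p r. cmod (g x) \<le> B2"
    and c: "\<forall>x\<in>cball p r. \<forall>y\<in>cball p r. cmod (f x - f y) \<le> C1 * dist x y powr \<alpha>"
           "\<forall>x\<in>cball p r. \<forall>y\<in>cball p r. cmod (g x - g y) \<le> C2 * dist x y powr \<alpha>"
    using assms unfolding hold_def by metis
  have "\<forall>x\<in>cball p r. cmod (f x + g x) \<le> B1 + B2"
    using b norm_triangle_le by (metis add_mono)
  moreover have "\<forall>x\<in>cball p r. \<forall>y\<in>cball p r. cmod ((f x + g x) - (f y + g y)) \<le> (C1 + C2) * dist x y powr \<alpha>"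
  proof (intro ballI)
    fix x y assume xy: "x \<in> cball p r" "y \<in> cball p r"
    have "cmod ((f x + g x) - (f y + g y)) \<le> cmod (f x - f y) + cmod (g x - g y)"
      by (metis add_diff_add norm_triangle_ineq)
    also have "\<dots> \<le> (C1 + C2) * dist x y powr \<alpha>"
      using c xy by (simp add: distrib_right add_mono)
    finally show "cmod ((f x + g x) - (f y + g y)) \<le> (C1 + C2) * dist x y powr \<alpha>" .
  qed
  ultimately show ?thesis unfolding hold_def by blast
qed

lemma hold_mult:
  assumes "hold p r \<alpha> f" "hold p r \<alpha> g"
  shows "hold p r \<alpha> (\<lambda>x. f x * g x)"
proof -
  obtain B1 C1 B2 C2 where b: "\<forall>x\<in>cball p r. cmod (f x) \<le> B1" "\<forall>x\<in>cball p r. cmod (g x) \<le> B2"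
    and c: "\<forall>x\<in>cball p r. \<forall>y\<in>cball p r. cmod (f x - f y) \<le> C1 * dist x y powr \<alpha>"
           "\<forall>x\<in>cball p r. \<forall>y\<in>cball p r. cmod (g x - g y) \<le> C2 * dist x y powr \<alpha>"
    using assms unfolding hold_def by metis
  have "\<forall>x\<in>cball p r. cmod (f x * g x) \<le> B1 * B2"
    using b by (simp add: norm_mult mult_mono')
  moreover have "\<forall>x\<in>cball p r. \<forall>y\<in>cball p r. cmod (f x * g x - f y * g y) \<le> (\<bar>B1\<bar> * \<bar>C2\<bar> + \<bar>B2\<bar> * \<bar>C1\<bar>) * dist x y powr \<alpha>"
  proof (intro ballI)
    fix x y assume xy: "x \<in> cball p r" "y \<in> cball p r"
    have e: "f x * g x - f y * g y = f x * (g x - g y) + g y * (f x - f y)" by (simp add: algebra_simps)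
    have "cmod (f x * g x - f y * g y) \<le> cmod (f x) * cmod (g x - g y) + cmod (g y) * cmod (f x - f y)"
      unfolding e by (metis norm_mult norm_triangle_ineq)
    also have "\<dots> \<le> \<bar>B1\<bar> * (\<bar>C2\<bar> * dist x y powr \<alpha>) + \<bar>B2\<bar> * (\<bar>C1\<bar> * dist x y powr \<alpha>)"
    proof (intro add_mono mult_mono)
      show "cmod (f x) \<le> \<bar>B1\<bar>" "cmod (g y) \<le> \<bar>B2\<bar>" using b xy by force+
      show "cmod (g x - g y) \<le> \<bar>C2\<bar> * dist x y powr \<alpha>"
        using c(2) xy by (meson abs_ge_self dual_order.trans mult_right_mono powr_ge_zero)
      show "cmod (f x - f y) \<le> \<bar>C1\<bar> * dist x y powr \<alpha>"
        using c(1) xy by (meson abs_ge_self dual_order.trans mult_right_mono powr_ge_zero)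
    qed auto
    finally show "cmod (f x * g x - f y * g y) \<le> (\<bar>B1\<bar> * \<bar>C2\<bar> + \<bar>B2\<bar> * \<bar>C1\<bar>) * dist x y powr \<alpha>"
      by (simp add: algebra_simps)
  qed
  ultimately show ?thesis unfolding hold_def by blast
qed

lemma hold_cmult: "hold p r \<alpha> f \<Longrightarrow> hold p r \<alpha> (\<lambda>x. c * f x)"
  using hold_mult[OF hold_const] by blast

lemma hold_diff: "hold p r \<alpha> f \<Longrightarrow> hold p r \<alpha> g \<Longrightarrow> hold p r \<alpha> (\<lambda>x. f x - g x)"
  using hold_add[of p r \<alpha> f "\<lambda>x. (-1) * g x"] hold_cmult[of p r \<alpha> g "-1"] by simp

lemma hold_of:
  assumes "0 < \<alpha>" "\<alpha> \<le> \<gamma>" "0 < r"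
    and c: "\<forall>x\<in>cball p r. \<forall>y\<in>cball p r. cmod (f x - f y) \<le> C * dist x y powr \<gamma>"
  shows "hold p r \<alpha> f"
proof -
  define C' where "C' = max C 0"
  have c': "cmod (f x - f y) \<le> C' * dist x y powr \<gamma>" if "x \<in> cball p r" "y \<in> cball p r" for x y
    using c that unfolding C'_def by (meson max.cobounded1 mult_right_mono order_trans powr_ge_zero)
  have "cmod (f x) \<le> cmod (f p) + C' * r powr \<gamma>" if "x \<in> cball p r" for x
  proof -
    have "cmod (f x) \<le> cmod (f p) + cmod (f x - f p)" by (metis norm_triangle_sub add.commute)
    also have "cmod (f x - f p) \<le> C' * dist x p powr \<gamma>" using c' that assms(3) by simp
    also have "\<dots> \<le> C' * r powr \<gamma>"
      using that assms(1,2) unfolding C'_def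
      by (intro mult_left_mono powr_mono2) (auto simp: dist_commute)
    finally show ?thesis by simp
  qed
  moreover have "cmod (f x - f y) \<le> (C' * (2*r) powr (\<gamma> - \<alpha>)) * dist x y powr \<alpha>"
    if xy: "x \<in> cball p r" "y \<in> cball p r" for x y
  proof (cases "x = y")
    case True then show ?thesis by simp
  next
    case False
    then have dpos: "dist x y > 0" by simp
    have d2: "dist x y \<le> 2 * r" using xy dist_triangle[of x y p] by (simp add: dist_commute)
    have "dist x y powr \<gamma> = dist x y powr (\<gamma> - \<alpha>) * dist x y powr \<alpha>"
      using dpos by (simp add: powr_add[symmetric])
    also have "\<dots> \<le> (2*r) powr (\<gamma> - \<alpha>) * dist x y powr \<alpha>"
      using d2 dpos assms(2) by (intro mult_right_mono powr_mono2) auto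
    finally have "C' * dist x y powr \<gamma> \<le> C' * ((2*r) powr (\<gamma> - \<alpha>) * dist x y powr \<alpha>)"
      unfolding C'_def by (intro mult_left_mono) auto
    then show ?thesis using c'[OF xy] by (simp add: mult.assoc)
  qed
  ultimately show ?thesis unfolding hold_def by blast
qed

lemma hold_lip:
  assumes "0 < \<alpha>" "\<alpha> \<le> 1" "0 < r"
    and c: "\<forall>x\<in>cball p r. \<forall>y\<in>cball p r. cmod (f x - f y) \<le> C * dist x y"
  shows "hold p r \<alpha> f"
  using hold_of[OF assms(1-3), of p f C] c by simp

lemma hold_tendsto:
  assumes "hold p r \<alpha> f" "0 < \<alpha>" "f p = 0" "T \<subseteq> cball p r"
  shows "(f \<longlongrightarrow> 0) (at p within T)"
proof -
  obtain C where c: "\<forall>x\<in>cball p r. \<forall>y\<in>cball p r. cmod (f x - f y) \<le> C * dist x y powr \<alpha>"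
    using assms(1) unfolding hold_def by blast
  have p: "p \<in> cball p r" if ne: "T \<noteq> {}"
  proof -
    obtain x where "x \<in> T" using ne by blast
    then have "dist p x \<le> r" using assms(4) by auto
    then have "0 \<le> r" using zero_le_dist order_trans by blast
    then show ?thesis by simp
  qed
  show ?thesis
  proof (cases "p \<in> cball p r")
    case False
    then have "T = {}" using p by blast
    then show ?thesis by simp
  next
    case True
    have ev: "\<forall>\<^sub>F x in at p within T. norm (f x) \<le> C * dist x p powr \<alpha>"
      unfolding eventually_at_filter
    proof (intro always_eventually allI impI)
      fix x assume "x \<noteq> p" "x \<in> T"
      then have "x \<in> cball p r" using assms(4) by blast
      then show "norm (f x) \<le> C * dist x p powr \<alpha>" using c True assms(3)
        by (metis diff_zero)
    qed
    have "((\<lambda>x. C * dist x p powr \<alpha>) \<longlongrightarrow> C * 0) (at p within T)"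
      apply (intro tendsto_mult tendsto_const tendsto_zero_powrI[where b=\<alpha>])
      using assms(2) by (auto intro!: tendsto_eq_intros)
    then show ?thesis using Lim_null_comparison[OF ev] by simp
  qed
qed

lemma powr_subadd:
  fixes s t g :: real
  assumes "0 \<le> t" "t \<le> s" "0 < g" "g \<le> 1"
  shows "s powr g \<le> t powr g + (s - t) powr g"
proof (cases "t = 0")
  case True then show ?thesis by simp
next
  case False
  then have t0: "0 < t" using assms by simp
  then have s0: "0 < s" using assms by simp
  have a: "t / s \<le> (t / s) powr g"
    using powr_mono'[of g 1 "t/s"] assms t0 s0 by simp
  have b: "(s - t) / s \<le> ((s - t) / s) powr g"
    using powr_mono'[of g 1 "(s-t)/s"] assms t0 s0 by simp
  have "s powr g = s powr g * (t / s + (s - t) / s)" using s0 by (simp add: field_simps)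
  also have "\<dots> \<le> s powr g * ((t / s) powr g + ((s - t) / s) powr g)"
    using a b by (intro mult_left_mono) auto
  also have "\<dots> = t powr g + (s - t) powr g"
    using s0 t0 assms by (simp add: powr_divide distrib_left)
  finally show ?thesis .
qed

lemma powr_diff_le:
  fixes s t g :: real
  assumes "0 \<le> t" "0 \<le> s" "0 < g" "g \<le> 1"
  shows "\<bar>s powr g - t powr g\<bar> \<le> \<bar>s - t\<bar> powr g"
proof (cases "t \<le> s")
  case True
  have "t powr g \<le> s powr g" using powr_mono2 assms True by simp
  then show ?thesis using powr_subadd[OF assms(1) True assms(3,4)] True by simp
next
  case False
  have "s powr g \<le> t powr g" using powr_mono2 assms False by simp
  then show ?thesis using powr_subadd[OF assms(2) _ assms(3,4), of t] False by simp
qed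

lemma wpow_holder_aux:
  fixes w v :: complex and \<beta> :: real
  assumes "0 < \<beta>" "\<beta> < 1" "cmod v \<le> cmod w"
  shows "cmod (w * of_real (cmod w powr (\<beta> - 1)) - v * of_real (cmod v powr (\<beta> - 1)))
         \<le> 4 * cmod (w - v) powr \<beta>"
proof (cases "v = 0")
  case True
  have "cmod w * cmod w powr (\<beta> - 1) = cmod w powr \<beta>"
    by (cases "w = 0") (simp_all add: powr_mult_base)
  then show ?thesis using True by (simp add: norm_mult)
next
  case False
  define V where "V = cmod v"
  define W where "W = cmod w"
  define d where "d = cmod (w - v)"
  have V0: "0 < V" using False V_def by simp
  have VW: "V \<le> W" using assms V_def W_def by simp
  have W0: "0 < W" using V0 VW by simp
  have dW: "d \<le> 2 * W" unfolding d_def W_def using norm_triangle_ineq4[of w v] VW V_def W_def by simp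
  have WV: "W - V \<le> d" unfolding d_def W_def V_def by (metis norm_triangle_ineq2)
  have e: "w * of_real (W powr (\<beta> - 1)) - v * of_real (V powr (\<beta> - 1))
      = (w - v) * of_real (W powr (\<beta> - 1)) + v * of_real (W powr (\<beta> - 1) - V powr (\<beta> - 1))"
    by (simp add: algebra_simps)
  have mono: "W powr (\<beta> - 1) \<le> V powr (\<beta> - 1)" using powr_mono2'[of "\<beta> - 1" V W] assms V0 VW by simp
  have "cmod (w * of_real (W powr (\<beta> - 1)) - v * of_real (V powr (\<beta> - 1)))
      \<le> d * W powr (\<beta> - 1) + V * (V powr (\<beta> - 1) - W powr (\<beta> - 1))"
  proof -
    have "cmod ((w - v) * of_real (W powr (\<beta> - 1)) + v * of_real (W powr (\<beta> - 1) - V powr (\<beta> - 1)))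
       \<le> cmod ((w - v) * of_real (W powr (\<beta> - 1))) + cmod (v * of_real (W powr (\<beta> - 1) - V powr (\<beta> - 1)))"
      by (rule norm_triangle_ineq)
    also have "\<dots> = d * W powr (\<beta> - 1) + V * (V powr (\<beta> - 1) - W powr (\<beta> - 1))"
      using mono unfolding norm_mult norm_of_real d_def V_def by simp
    finally show ?thesis unfolding e .
  qed
  also have "V * (V powr (\<beta> - 1) - W powr (\<beta> - 1)) = V powr \<beta> - V * W powr (\<beta> - 1)"
    using V0 by (simp add: right_diff_distrib powr_mult_base)
  also have "\<dots> \<le> W powr \<beta> - V * W powr (\<beta> - 1)"
    using powr_mono2[of \<beta> V W] assms V0 VW by simp
  also have "W powr \<beta> - V * W powr (\<beta> - 1) = (W - V) * W powr (\<beta> - 1)"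
    using W0 by (simp add: left_diff_distrib powr_mult_base)
  also have "(W - V) * W powr (\<beta> - 1) \<le> d * W powr (\<beta> - 1)"
    using WV by (intro mult_right_mono) auto
  finally have main: "cmod (w * of_real (W powr (\<beta> - 1)) - v * of_real (V powr (\<beta> - 1)))
      \<le> 2 * d * W powr (\<beta> - 1)" by simp
  show ?thesis
  proof (cases "d = 0")
    case True
    then show ?thesis using main by (simp add: V_def W_def)
  next
    case False
    then have d0: "0 < d" unfolding d_def by simp
    have "W powr (\<beta> - 1) \<le> (d/2) powr (\<beta> - 1)"
      using powr_mono2'[of "\<beta> - 1" "d/2" W] assms d0 dW by simp
    also have "\<dots> = d powr (\<beta> - 1) * 2 powr (1 - \<beta>)"
      using d0 by (simp add: powr_divide powr_diff)
    also have "\<dots> \<le> d powr (\<beta> - 1) * 2"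
      using powr_mono[of "1 - \<beta>" 1 2] assms by (intro mult_left_mono) auto
    finally have "2 * d * W powr (\<beta> - 1) \<le> 2 * d * (d powr (\<beta> - 1) * 2)"
      using d0 by (intro mult_left_mono) auto
    also have "\<dots> = 4 * d powr \<beta>" using d0 by (simp add: powr_mult_base mult_ac)
    finally show ?thesis using main by (simp add: V_def W_def d_def)
  qed
qed

lemma wpow_holder:
  fixes w v :: complex and \<beta> :: real
  assumes "0 < \<beta>" "\<beta> < 1"
  shows "cmod (w * of_real (cmod w powr (\<beta> - 1)) - v * of_real (cmod v powr (\<beta> - 1)))
         \<le> 4 * cmod (w - v) powr \<beta>"
proof (cases "cmod v \<le> cmod w")
  case True then show ?thesis using wpow_holder_aux assms by blast
next
  case False
  then have "cmod (v * of_real (cmod v powr (\<beta> - 1)) - w * of_real (cmod w powr (\<beta> - 1)))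
         \<le> 4 * cmod (v - w) powr \<beta>" using wpow_holder_aux[OF assms, of w v] by simp
  then show ?thesis by (simp add: norm_minus_commute)
qed

lemma nth1_le_dist: "cmod (x $ 1 - y $ 1) \<le> dist x (y::complex^2)"
  using Finite_Cartesian_Product.norm_nth_le[of "x - y" 1] by (simp add: dist_norm)

lemma hold_s:
  assumes "0 < \<alpha>" "\<alpha> \<le> \<gamma>" "\<gamma> \<le> 1" "0 < r"
  shows "hold p r \<alpha> (\<lambda>x. complex_of_real (cmod (x $ 1) powr \<gamma>))"
proof (rule hold_of[OF assms(1,2,4), where C=1], intro ballI)
  fix x y :: "complex^2"
  have "cmod (complex_of_real (cmod (x $ 1) powr \<gamma>) - complex_of_real (cmod (y $ 1) powr \<gamma>))
      = \<bar>cmod (x $ 1) powr \<gamma> - cmod (y $ 1) powr \<gamma>\<bar>"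
    by (metis norm_of_real of_real_diff)
  also have "\<dots> \<le> \<bar>cmod (x $ 1) - cmod (y $ 1)\<bar> powr \<gamma>"
    using assms by (intro powr_diff_le) auto
  also have "\<dots> \<le> dist x y powr \<gamma>"
    using assms nth1_le_dist[of x y] norm_triangle_ineq3[of "x$1" "y$1"]
    by (intro powr_mono2) auto
  finally show "cmod (complex_of_real (cmod (x $ 1) powr \<gamma>) - complex_of_real (cmod (y $ 1) powr \<gamma>))
      \<le> 1 * dist x y powr \<gamma>" by simp
qed

lemma hold_abs1:
  assumes "0 < \<alpha>" "\<alpha> \<le> 1" "0 < r"
  shows "hold p r \<alpha> (\<lambda>x. complex_of_real (cmod (x $ 1)))"
proof (rule hold_lip[OF assms, where C=1], intro ballI)
  fix x y :: "complex^2"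
  have "cmod (complex_of_real (cmod (x $ 1)) - complex_of_real (cmod (y $ 1)))
      = \<bar>cmod (x $ 1) - cmod (y $ 1)\<bar>"
    by (metis norm_of_real of_real_diff)
  also have "\<dots> \<le> dist x y"
    using nth1_le_dist[of x y] norm_triangle_ineq3[of "x$1" "y$1"] by linarith
  finally show "cmod (complex_of_real (cmod (x $ 1)) - complex_of_real (cmod (y $ 1))) \<le> 1 * dist x y"
    by simp
qed

lemma hold_z1:
  assumes "0 < \<alpha>" "\<alpha> \<le> 1" "0 < r"
  shows "hold p r \<alpha> (\<lambda>x. x $ 1)"
  by (rule hold_lip[OF assms, where C=1]) (simp add: nth1_le_dist)

lemma hold_cz1:
  assumes "0 < \<alpha>" "\<alpha> \<le> 1" "0 < r"
  shows "hold p r \<alpha> (\<lambda>x. cnj (x $ 1))"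
  by (rule hold_lip[OF assms, where C=1]) (metis complex_cnj_diff complex_mod_cnj mult_1 nth1_le_dist)

lemma hold_w:
  assumes "0 < \<alpha>" "\<alpha> \<le> \<beta>" "\<beta> < 1" "0 < r"
  shows "hold p r \<alpha> (\<lambda>x. x $ 1 * complex_of_real (cmod (x $ 1) powr (\<beta> - 1)))"
proof (rule hold_of[OF assms(1,2,4), where C=4], intro ballI)
  fix x y :: "complex^2"
  have "cmod (x $ 1 * complex_of_real (cmod (x $ 1) powr (\<beta> - 1)) - y $ 1 * complex_of_real (cmod (y $ 1) powr (\<beta> - 1)))
     \<le> 4 * cmod (x $ 1 - y $ 1) powr \<beta>"
    using assms by (intro wpow_holder) auto
  also have "\<dots> \<le> 4 * dist x y powr \<beta>"
    using assms nth1_le_dist[of x y] by (intro mult_left_mono powr_mono2) auto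
  finally show "cmod (x $ 1 * complex_of_real (cmod (x $ 1) powr (\<beta> - 1)) - y $ 1 * complex_of_real (cmod (y $ 1) powr (\<beta> - 1)))
     \<le> 4 * dist x y powr \<beta>" .
qed

lemma hold_cw:
  assumes "0 < \<alpha>" "\<alpha> \<le> \<beta>" "\<beta> < 1" "0 < r"
  shows "hold p r \<alpha> (\<lambda>x. cnj (x $ 1) * complex_of_real (cmod (x $ 1) powr (\<beta> - 1)))"
proof (rule hold_of[OF assms(1,2,4), where C=4], intro ballI)
  fix x y :: "complex^2"
  have "cmod (cnj (x $ 1) * complex_of_real (cmod (x $ 1) powr (\<beta> - 1)) - cnj (y $ 1) * complex_of_real (cmod (y $ 1) powr (\<beta> - 1)))
     = cmod (x $ 1 * complex_of_real (cmod (x $ 1) powr (\<beta> - 1)) - y $ 1 * complex_of_real (cmod (y $ 1) powr (\<beta> - 1)))"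
    by (metis complex_cnj_complex_of_real complex_cnj_diff complex_cnj_mult complex_mod_cnj)
  also have "\<dots> \<le> 4 * cmod (x $ 1 - y $ 1) powr \<beta>"
    using assms by (intro wpow_holder) auto
  also have "\<dots> \<le> 4 * dist x y powr \<beta>"
    using assms nth1_le_dist[of x y] by (intro mult_left_mono powr_mono2) auto
  finally show "cmod (cnj (x $ 1) * complex_of_real (cmod (x $ 1) powr (\<beta> - 1)) - cnj (y $ 1) * complex_of_real (cmod (y $ 1) powr (\<beta> - 1)))
     \<le> 4 * dist x y powr \<beta>" .
qed

lemma hold_smooth:
  fixes g :: "complex^2 \<Rightarrow> complex"
  assumes "0 < \<alpha>" "\<alpha> \<le> 1" "0 < r" "open S" "cball p r \<subseteq> S" "smooth_on S g"
  shows "hold p r \<alpha> g"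
proof -
  obtain L where "\<forall>x\<in>cball p r. \<forall>y\<in>cball p r. norm (g x - g y) \<le> L * dist x y"
    using smooth_lip[OF assms(4-6)] by blast
  then show ?thesis using hold_lip[OF assms(1-3)] by blast
qed

lemma dz_hasd: "(f has_derivative D) (at x) \<Longrightarrow> dz j f x = (D (axis j 1) - \<i> * D (axis j \<i>)) / 2"
  unfolding dz_def using frechet_derivative_at by metis

lemma dzbar_hasd: "(f has_derivative D) (at x) \<Longrightarrow> dzbar j f x = (D (axis j 1) + \<i> * D (axis j \<i>)) / 2"
  unfolding dzbar_def using frechet_derivative_at by metis

lemma dz_cong:
  assumes "open X" "x \<in> X" "\<And>y. y \<in> X \<Longrightarrow> f y = g y"
  shows "dz j f x = dz j g x"
proof -
  have "frechet_derivative f (at x) = frechet_derivative g (at x)" using fd_cong[OF assms] .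
  then show ?thesis unfolding dz_def by simp
qed

lemma dzbar_cong:
  assumes "open X" "x \<in> X" "\<And>y. y \<in> X \<Longrightarrow> f y = g y"
  shows "dzbar j f x = dzbar j g x"
proof -
  have "frechet_derivative f (at x) = frechet_derivative g (at x)" using fd_cong[OF assms] .
  then show ?thesis unfolding dzbar_def by simp
qed

lemma dz_mult:
  assumes "(f has_derivative Df) (at x)" "(g has_derivative Dg) (at x)"
  shows "dz j (\<lambda>y. f y * g y) x = f x * dz j g x + g x * dz j f x"
proof -
  have H: "((\<lambda>y. f y * g y) has_derivative (\<lambda>h. f x * Dg h + Df h * g x)) (at x)"
    using has_derivative_mult[OF assms] .
  show ?thesis unfolding dz_hasd[OF assms(1)] dz_hasd[OF assms(2)] dz_hasd[OF H]
    by (simp add: algebra_simps diff_divide_distrib add_divide_distrib)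
qed

lemma dzbar_mult:
  assumes "(f has_derivative Df) (at x)" "(g has_derivative Dg) (at x)"
  shows "dzbar j (\<lambda>y. f y * g y) x = f x * dzbar j g x + g x * dzbar j f x"
proof -
  have H: "((\<lambda>y. f y * g y) has_derivative (\<lambda>h. f x * Dg h + Df h * g x)) (at x)"
    using has_derivative_mult[OF assms] .
  show ?thesis unfolding dzbar_hasd[OF assms(1)] dzbar_hasd[OF assms(2)] dzbar_hasd[OF H]
    by (simp add: algebra_simps diff_divide_distrib add_divide_distrib)
qed

lemma dz_add:
  assumes "(f has_derivative Df) (at x)" "(g has_derivative Dg) (at x)"
  shows "dz j (\<lambda>y. f y + g y) x = dz j f x + dz j g x"
proof -
  have H: "((\<lambda>y. f y + g y) has_derivative (\<lambda>h. Df h + Dg h)) (at x)"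
    using has_derivative_add[OF assms] .
  show ?thesis unfolding dz_hasd[OF assms(1)] dz_hasd[OF assms(2)] dz_hasd[OF H]
    by (simp add: algebra_simps diff_divide_distrib add_divide_distrib)
qed

lemma dz_const: "dz j (\<lambda>y. c) x = 0"
  unfolding dz_def by simp

lemma vnth_hasd[derivative_intros]: "((\<lambda>x. x $ i) has_derivative (\<lambda>x. x $ i)) F"
  by (rule bounded_linear_imp_has_derivative) (rule bounded_linear_vec_nth)

definition qq :: "complex^2 \<Rightarrow> real" where "qq y = Re (y$1)^2 + Im (y$1)^2"

lemma qq_eq: "qq y = cmod (y$1) ^ 2"
  unfolding qq_def by (simp add: cmod_power2)

lemma qq_hasd: "(qq has_derivative (\<lambda>v. 2 * Re (y$1) * Re (v$1) + 2 * Im (y$1) * Im (v$1))) (at y)"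
  unfolding qq_def
  by (auto intro!: derivative_eq_intros simp: mult_ac)

definition Gc :: "real \<Rightarrow> complex^2 \<Rightarrow> complex" where
  "Gc \<beta> = (\<lambda>w. complex_of_real (cmod (w$1) powr (2*\<beta>)))"

lemma qq_pos: "y $ 1 \<noteq> 0 \<Longrightarrow> 0 < qq y"
  unfolding qq_eq by simp

lemma qq_powr: "qq y powr t = cmod (y$1) powr (2*t)"
proof (cases "y$1 = 0")
  case True then show ?thesis by (simp add: qq_eq)
next
  case False
  then have e: "cmod (y$1) ^ 2 = cmod (y$1) powr 2" by (simp add: powr_numeral)
  show ?thesis by (simp only: qq_eq e powr_powr)
qed

lemma Gc_qq: "Gc \<beta> = (\<lambda>y. complex_of_real (qq y powr \<beta>))"
  unfolding Gc_def qq_powr by simp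

lemma open_O: "open {y::complex^2. y $ 1 \<noteq> 0}"
  by (intro open_Collect_neq continuous_intros)

lemma G_hasd: "y $ 1 \<noteq> 0 \<Longrightarrow> (Gc \<beta> has_derivative
   (\<lambda>v. complex_of_real (\<beta> * qq y powr (\<beta> - 1) * (2 * Re (y$1) * Re (v$1) + 2 * Im (y$1) * Im (v$1))))) (at y)"
  unfolding Gc_qq
  apply (drule qq_pos)
  apply (rule derivative_eq_intros qq_hasd refl | simp)+
  apply (rule ext)
  apply (simp add: powr_diff field_simps)
  done

definition K1 :: "real \<Rightarrow> complex^2 \<Rightarrow> complex" where
  "K1 \<beta> y = complex_of_real (\<beta> * qq y powr (\<beta> - 1)) * y$1"

lemma dzbar_G1_K: "y $ 1 \<noteq> 0 \<Longrightarrow> dzbar 1 (Gc \<beta>) y = K1 \<beta> y"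
  unfolding dzbar_hasd[OF G_hasd] K1_def
  by (rule complex_eqI) (simp_all add: axis_def algebra_simps)

lemma dz_G1: "y $ 1 \<noteq> 0 \<Longrightarrow> dz 1 (Gc \<beta>) y = complex_of_real (\<beta> * qq y powr (\<beta> - 1)) * cnj (y$1)"
  unfolding dz_hasd[OF G_hasd]
  by (rule complex_eqI) (simp_all add: axis_def algebra_simps)

lemma dz_G2: "y $ 1 \<noteq> 0 \<Longrightarrow> dz 2 (Gc \<beta>) y = 0"
  unfolding dz_hasd[OF G_hasd] by (simp add: axis_def)

lemma dzbar_G2: "y $ 1 \<noteq> 0 \<Longrightarrow> dzbar 2 (Gc \<beta>) y = 0"
  unfolding dzbar_hasd[OF G_hasd] by (simp add: axis_def)

lemma K1_hasd: "y $ 1 \<noteq> 0 \<Longrightarrow> (K1 \<beta> has_derivative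
   (\<lambda>v. complex_of_real (\<beta> * ((\<beta> - 1) * qq y powr (\<beta> - 2) * (2 * Re (y$1) * Re (v$1) + 2 * Im (y$1) * Im (v$1)))) * y$1
       + complex_of_real (\<beta> * qq y powr (\<beta> - 1)) * v$1)) (at y)"
  unfolding K1_def[abs_def]
  apply (drule qq_pos)
  apply (rule derivative_eq_intros qq_hasd refl | simp)+
  apply (rule ext)
  apply (simp add: powr_diff field_simps power2_eq_square)
  done

lemma dzbar_G1_hasd: "y $ 1 \<noteq> 0 \<Longrightarrow> (dzbar 1 (Gc \<beta>) has_derivative
   (\<lambda>v. complex_of_real (\<beta> * ((\<beta> - 1) * qq y powr (\<beta> - 2) * (2 * Re (y$1) * Re (v$1) + 2 * Im (y$1) * Im (v$1)))) * y$1
       + complex_of_real (\<beta> * qq y powr (\<beta> - 1)) * v$1)) (at y)"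
proof -
  assume y: "y $ 1 \<noteq> 0"
  show ?thesis
    by (rule has_derivative_transform_within_open[OF K1_hasd[OF y] open_O]) (use y dzbar_G1_K in auto)
qed

lemma dzbar_G2_hasd: "y $ 1 \<noteq> 0 \<Longrightarrow> (dzbar 2 (Gc \<beta>) has_derivative (\<lambda>v. 0)) (at y)"
proof -
  assume y: "y $ 1 \<noteq> 0"
  show ?thesis
    by (rule has_derivative_transform_within_open[OF has_derivative_const open_O]) (use y dzbar_G2 in auto)
qed

lemma dz_dzbar_G11: "y $ 1 \<noteq> 0 \<Longrightarrow> dz 1 (dzbar 1 (Gc \<beta>)) y = complex_of_real (\<beta>^2 * qq y powr (\<beta> - 1))"
proof -
  assume y: "y $ 1 \<noteq> 0"
  have q: "qq y powr (\<beta> - 2) * qq y = qq y powr (\<beta> - 1)"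
    using qq_pos[OF y] by (simp add: powr_diff power2_eq_square)
  have q2: "qq y = Re (y$1)^2 + Im (y$1)^2" by (simp add: qq_def)
  have "dz 1 (dzbar 1 (Gc \<beta>)) y = complex_of_real (\<beta> * (\<beta> - 1) * (qq y powr (\<beta> - 2) * (Re (y$1)^2 + Im (y$1)^2)) + \<beta> * qq y powr (\<beta> - 1))"
    unfolding dz_hasd[OF dzbar_G1_hasd[OF y]]
    by (rule complex_eqI) (simp_all add: axis_def field_simps power2_eq_square)
  also have "\<dots> = complex_of_real (\<beta> * (\<beta> - 1) * (qq y powr (\<beta> - 2) * qq y) + \<beta> * qq y powr (\<beta> - 1))"
    unfolding q2 ..
  also have "\<dots> = complex_of_real (\<beta>^2 * qq y powr (\<beta> - 1))"
    unfolding q by (simp add: algebra_simps power2_eq_square)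
  finally show ?thesis .
qed

lemma dz_dzbar_G21: "y $ 1 \<noteq> 0 \<Longrightarrow> dz 2 (dzbar 1 (Gc \<beta>)) y = 0"
  unfolding dz_hasd[OF dzbar_G1_hasd] by (simp add: axis_def)

lemma dz_dzbar_G2: "y $ 1 \<noteq> 0 \<Longrightarrow> dz j (dzbar 2 (Gc \<beta>)) y = 0"
  unfolding dz_hasd[OF dzbar_G2_hasd] by simp

lemma ddbar_u:
  assumes "open S" "smooth_on S Fc" "x \<in> S" "x $ 1 \<noteq> 0"
  shows "dz j (dzbar k (\<lambda>w. Fc w * Gc \<beta> w)) x =
     Fc x * dz j (dzbar k (Gc \<beta>)) x + dzbar k (Gc \<beta>) x * dz j Fc x
     + (Gc \<beta> x * dz j (dzbar k Fc) x + dzbar k Fc x * dz j (Gc \<beta>) x)"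
proof -
  define X where "X = S \<inter> {y. y $ 1 \<noteq> 0}"
  have X: "open X" "x \<in> X" unfolding X_def using assms open_O by auto
  have hF: "(Fc has_derivative frechet_derivative Fc (at y)) (at y)" if "y \<in> S" for y
    using smooth_has_deriv[OF assms(1,2) that] .
  have hPF: "(dzbar k Fc has_derivative frechet_derivative (dzbar k Fc) (at y)) (at y)" if "y \<in> S" for y
    using smooth_has_deriv[OF assms(1) smooth_dzbar[OF assms(1,2)] that] .
  have hPG: "\<exists>D. (dzbar k (Gc \<beta>) has_derivative D) (at x)"
    using exhaust_2[of k] dzbar_G1_hasd[OF assms(4)] dzbar_G2_hasd[OF assms(4)] by blast
  then obtain DPG where DPG: "(dzbar k (Gc \<beta>) has_derivative DPG) (at x)" by blast
  have e: "dzbar k (\<lambda>w. Fc w * Gc \<beta> w) y = Fc y * dzbar k (Gc \<beta>) y + Gc \<beta> y * dzbar k Fc y"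
    if "y \<in> X" for y
    using dzbar_mult[OF hF G_hasd] that unfolding X_def by auto
  have "dz j (dzbar k (\<lambda>w. Fc w * Gc \<beta> w)) x
      = dz j (\<lambda>y. Fc y * dzbar k (Gc \<beta>) y + Gc \<beta> y * dzbar k Fc y) x"
    by (rule dz_cong[OF X]) (use e in auto)
  also have "\<dots> = dz j (\<lambda>y. Fc y * dzbar k (Gc \<beta>) y) x + dz j (\<lambda>y. Gc \<beta> y * dzbar k Fc y) x"
    by (rule dz_add[OF has_derivative_mult[OF hF[OF assms(3)] DPG]
                       has_derivative_mult[OF G_hasd[OF assms(4)] hPF[OF assms(3)]]])
  also have "\<dots> = Fc x * dz j (dzbar k (Gc \<beta>)) x + dzbar k (Gc \<beta>) x * dz j Fc x
     + (Gc \<beta> x * dz j (dzbar k Fc) x + dzbar k Fc x * dz j (Gc \<beta>) x)"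
    using dz_mult[OF hF[OF assms(3)] DPG] dz_mult[OF G_hasd[OF assms(4)] hPF[OF assms(3)]] by simp
  finally show ?thesis .
qed

lemma real_ids:
  fixes a s \<beta> Fp :: real
  assumes "0 < a" "0 < s" "a powr (2*\<beta>) = Fp"
  shows "(a * s) powr (1-\<beta>) * (a * s) powr (1-\<beta>) / (a * a) = s powr (1-\<beta>) * s powr (1-\<beta>) / Fp"
    and "(a * s) powr (2*\<beta>-2) * ((a * s) powr (1-\<beta>) * (a * s) powr (1-\<beta>)) = 1"
    and "s powr (2*(\<beta>-1)) * (s powr (1-\<beta>) * s powr (1-\<beta>)) = 1"
    and "s powr (2*\<beta>) * (s powr (1-\<beta>) * s powr (1-\<beta>)) = s * s"
    and "(a * s) powr (1-\<beta>) / (a * b) = s powr (1-\<beta>) * (1 / (a powr \<beta> * b))"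
    and "s powr (2*\<beta>) * s powr (1-\<beta>) = s * s powr \<beta>"
    and "s powr (2*(\<beta>-1)) * s powr (1-\<beta>) = s powr (\<beta> - 1)"
    and "s powr (2*\<beta>) = s powr \<beta> * s powr \<beta>"
proof -
  have aa: "a * a = a powr 2" using assms by (simp add: powr_numeral power2_eq_square)
  show "(a * s) powr (1-\<beta>) * (a * s) powr (1-\<beta>) / (a * a) = s powr (1-\<beta>) * s powr (1-\<beta>) / Fp"
  proof -
    have e1: "(a * s) powr (1-\<beta>) * (a * s) powr (1-\<beta>) = a powr (2 - 2*\<beta>) * (s powr (1-\<beta>) * s powr (1-\<beta>))"
      using assms by (simp add: powr_mult powr_add[symmetric] mult_ac)
    have e2: "a powr (2 - 2*\<beta>) = (a * a) / Fp"
      unfolding aa assms(3)[symmetric] by (simp add: powr_diff)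
    have Fp: "0 < Fp" using assms(3)[symmetric] assms(1) by simp
    show ?thesis unfolding e1 e2 using assms(1) Fp by (simp add: field_simps)
  qed
  show "(a * s) powr (2*\<beta>-2) * ((a * s) powr (1-\<beta>) * (a * s) powr (1-\<beta>)) = 1"
    using assms by (simp add: powr_add[symmetric])
  show "s powr (2*(\<beta>-1)) * (s powr (1-\<beta>) * s powr (1-\<beta>)) = 1"
    using assms by (simp add: powr_add[symmetric])
  show "s powr (2*\<beta>) * (s powr (1-\<beta>) * s powr (1-\<beta>)) = s * s"
    using assms by (simp add: powr_add[symmetric] powr_numeral power2_eq_square)
  show "(a * s) powr (1-\<beta>) / (a * b) = s powr (1-\<beta>) * (1 / (a powr \<beta> * b))"
    using assms by (simp add: powr_mult powr_diff field_simps)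
  show "s powr (2*\<beta>) * s powr (1-\<beta>) = s * s powr \<beta>"
    using assms by (simp add: powr_add[symmetric] powr_add)
  show "s powr (2*(\<beta>-1)) * s powr (1-\<beta>) = s powr (\<beta> - 1)"
    using assms by (simp add: powr_add[symmetric])
  show "s powr (2*\<beta>) = s powr \<beta> * s powr \<beta>"
    using assms by (simp add: powr_add[symmetric])
qed

lemma sig11:
  fixes \<omega> :: "complex^2 \<Rightarrow> complex^2^2"
  assumes a: "0 < a" and x: "x$1 \<noteq> 0" and Fp: "a powr (2*\<beta>) = Fp"
    and H: "\<omega> x $1$1 = e + (Fc x * of_real (\<beta>^2 * cmod (x$1) powr (2*(\<beta>-1)))
        + of_real (\<beta> * cmod (x$1) powr (2*(\<beta>-1))) * x$1 * Q
        + (of_real (cmod (x$1) powr (2*\<beta>)) * R + P * (of_real (\<beta> * cmod (x$1) powr (2*(\<beta>-1))) * cnj (x$1))))"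
  shows "cone_sigma_coeff \<beta> a b \<omega> 1 1 x =
     (e * of_real (cmod (x$1) powr (1-\<beta>)) * of_real (cmod (x$1) powr (1-\<beta>)) + Fc x * of_real (\<beta>^2)
      + of_real \<beta> * x$1 * Q + of_real (cmod (x$1)) * of_real (cmod (x$1)) * R + of_real \<beta> * cnj (x$1) * P)
     / of_real Fp - of_real (\<beta>^2)"
proof -
  define s where "s = cmod (x$1)"
  define h where "h = s powr (1-\<beta>)"
  have s: "0 < s" using x s_def by simp
  have h: "0 < h" using s h_def by simp
  have Fp0: "0 < Fp" using Fp[symmetric] a by simp
  have g_eq: "s powr (2*(\<beta>-1)) = 1 / (h*h)"
    using real_ids(3)[OF a s Fp] h unfolding h_def by (simp add: field_simps)
  have p_eq: "s powr (2*\<beta>) = s * s / (h*h)"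
    using real_ids(4)[OF a s Fp] h unfolding h_def by (simp add: field_simps)
  have "cone_sigma_coeff \<beta> a b \<omega> 1 1 x
      = (\<omega> x $1$1 / of_real (a * a) - of_real (\<beta>^2 * (a * s) powr (2*\<beta>-2)))
        * of_real ((a * s) powr (1-\<beta>) * (a * s) powr (1-\<beta>))"
    by (simp add: cone_sigma_coeff_def Let_def s_def)
  also have "\<dots> = \<omega> x $1$1 * of_real ((a * s) powr (1-\<beta>) * (a * s) powr (1-\<beta>) / (a * a))
      - of_real (\<beta>^2) * of_real ((a * s) powr (2*\<beta>-2) * ((a * s) powr (1-\<beta>) * (a * s) powr (1-\<beta>)))"
    using a by (simp add: field_simps)
  also have "\<dots> = \<omega> x $1$1 * of_real (h * h / Fp) - of_real (\<beta>^2)"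
    unfolding real_ids(1,2)[OF a s Fp] h_def by simp
  also have "\<dots> = (e * of_real h * of_real h + Fc x * of_real (\<beta>^2)
      + of_real \<beta> * x$1 * Q + of_real s * of_real s * R + of_real \<beta> * cnj (x$1) * P)
     / of_real Fp - of_real (\<beta>^2)"
    unfolding H s_def[symmetric] g_eq p_eq using h Fp0 by (simp add: field_simps)
  finally show ?thesis unfolding h_def s_def .
qed


lemma sig12:
  fixes \<omega> :: "complex^2 \<Rightarrow> complex^2^2"
  assumes a: "0 < a" and b: "0 < b" and x: "x$1 \<noteq> 0" and Fp: "a powr (2*\<beta>) = Fp"
    and H: "\<omega> x $1$2 = e + (of_real (cmod (x$1) powr (2*\<beta>)) * R + P * (of_real (\<beta> * cmod (x$1) powr (2*(\<beta>-1))) * cnj (x$1)))"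
  shows "cone_sigma_coeff \<beta> a b \<omega> 1 2 x =
     (e * of_real (cmod (x$1) powr (1-\<beta>)) + of_real (cmod (x$1)) * of_real (cmod (x$1) powr \<beta>) * R
      + of_real \<beta> * P * (cnj (x$1) * of_real (cmod (x$1) powr (\<beta> - 1)))) * of_real (1 / (a powr \<beta> * b))"
proof -
  define s where "s = cmod (x$1)"
  define h where "h = s powr (1-\<beta>)"
  have s: "0 < s" using x s_def by simp
  have h: "0 < h" using s h_def by simp
  have g_eq: "s powr (2*(\<beta>-1)) = s powr (\<beta> - 1) / h"
    using real_ids(7)[OF a s Fp] h unfolding h_def by (simp add: field_simps)
  have p_eq: "s powr (2*\<beta>) = s * s powr \<beta> / h"
    using real_ids(6)[OF a s Fp] h unfolding h_def by (simp add: field_simps)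
  have "cone_sigma_coeff \<beta> a b \<omega> 1 2 x = (\<omega> x $1$2 / of_real (a * b)) * of_real ((a * s) powr (1-\<beta>))"
    by (simp add: cone_sigma_coeff_def Let_def s_def)
  also have "\<dots> = \<omega> x $1$2 * of_real ((a * s) powr (1-\<beta>) / (a * b))"
    using a b by (simp add: field_simps)
  also have "\<dots> = \<omega> x $1$2 * of_real (h * (1 / (a powr \<beta> * b)))"
    unfolding real_ids(5)[OF a s Fp] h_def by simp
  also have "\<dots> = (e * of_real h + of_real s * of_real (s powr \<beta>) * R
      + of_real \<beta> * P * (cnj (x$1) * of_real (s powr (\<beta> - 1)))) * of_real (1 / (a powr \<beta> * b))"
    proof -
    have "complex_of_real h \<noteq> 0" "complex_of_real b \<noteq> 0" "complex_of_real (a powr \<beta>) \<noteq> 0"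
      using h a b by auto
    then show ?thesis unfolding H s_def[symmetric] g_eq p_eq by (simp add: field_simps)
  qed
  finally show ?thesis unfolding h_def s_def .
qed

lemma sig21:
  fixes \<omega> :: "complex^2 \<Rightarrow> complex^2^2"
  assumes a: "0 < a" and b: "0 < b" and x: "x$1 \<noteq> 0" and Fp: "a powr (2*\<beta>) = Fp"
    and H: "\<omega> x $2$1 = e + (of_real (\<beta> * cmod (x$1) powr (2*(\<beta>-1))) * x$1 * Q + of_real (cmod (x$1) powr (2*\<beta>)) * R)"
  shows "cone_sigma_coeff \<beta> a b \<omega> 2 1 x =
     (e * of_real (cmod (x$1) powr (1-\<beta>)) + of_real (cmod (x$1)) * of_real (cmod (x$1) powr \<beta>) * R
      + of_real \<beta> * Q * (x$1 * of_real (cmod (x$1) powr (\<beta> - 1)))) * of_real (1 / (a powr \<beta> * b))"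
proof -
  define s where "s = cmod (x$1)"
  define h where "h = s powr (1-\<beta>)"
  have s: "0 < s" using x s_def by simp
  have h: "0 < h" using s h_def by simp
  have g_eq: "s powr (2*(\<beta>-1)) = s powr (\<beta> - 1) / h"
    using real_ids(7)[OF a s Fp] h unfolding h_def by (simp add: field_simps)
  have p_eq: "s powr (2*\<beta>) = s * s powr \<beta> / h"
    using real_ids(6)[OF a s Fp] h unfolding h_def by (simp add: field_simps)
  have "cone_sigma_coeff \<beta> a b \<omega> 2 1 x = (\<omega> x $2$1 / of_real (b * a)) * of_real ((a * s) powr (1-\<beta>))"
    by (simp add: cone_sigma_coeff_def Let_def s_def)
  also have "\<dots> = \<omega> x $2$1 * of_real ((a * s) powr (1-\<beta>) / (a * b))"
    using a b by (simp add: field_simps)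
  also have "\<dots> = \<omega> x $2$1 * of_real (h * (1 / (a powr \<beta> * b)))"
    unfolding real_ids(5)[OF a s Fp] h_def by simp
  also have "\<dots> = (e * of_real h + of_real s * of_real (s powr \<beta>) * R
      + of_real \<beta> * Q * (x$1 * of_real (s powr (\<beta> - 1)))) * of_real (1 / (a powr \<beta> * b))"
    proof -
    have "complex_of_real h \<noteq> 0" "complex_of_real b \<noteq> 0" "complex_of_real (a powr \<beta>) \<noteq> 0"
      using h a b by auto
    then show ?thesis unfolding H s_def[symmetric] g_eq p_eq by (simp add: field_simps)
  qed
  finally show ?thesis unfolding h_def s_def .
qed

lemma sig22:
  fixes \<omega> :: "complex^2 \<Rightarrow> complex^2^2"
  assumes a: "0 < a" and b: "0 < b" and x: "x$1 \<noteq> 0" and Fp: "a powr (2*\<beta>) = Fp"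
    and H: "\<omega> x $2$2 = e + of_real (cmod (x$1) powr (2*\<beta>)) * R"
  shows "cone_sigma_coeff \<beta> a b \<omega> 2 2 x =
     (e + of_real (cmod (x$1) powr \<beta>) * of_real (cmod (x$1) powr \<beta>) * R) / of_real (b * b) - 1"
proof -
  define s where "s = cmod (x$1)"
  have s: "0 < s" using x s_def by simp
  have "cone_sigma_coeff \<beta> a b \<omega> 2 2 x = \<omega> x $2$2 / of_real (b * b) - 1"
    by (simp add: cone_sigma_coeff_def Let_def s_def)
  also have "\<dots> = (e + of_real (s powr \<beta>) * of_real (s powr \<beta>) * R) / of_real (b * b) - 1"
    unfolding H s_def[symmetric] real_ids(8)[OF a s Fp] by simp
  finally show ?thesis unfolding s_def .
qed

lemma hold_divc: "hold p r \<alpha> f \<Longrightarrow> hold p r \<alpha> (\<lambda>x. f x / c)"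
  using hold_mult[OF _ hold_const, of p r \<alpha> f "inverse c"] by (simp add: divide_inverse)

lemma hold_uniform:
  fixes E :: "2 \<Rightarrow> 2 \<Rightarrow> complex^2 \<Rightarrow> complex"
  assumes "\<forall>j k. hold p r \<alpha> (E j k)"
  shows "\<exists>C. \<forall>j k. \<forall>x\<in>cball p r. \<forall>y\<in>cball p r. cmod (E j k x - E j k y) \<le> C * dist x y powr \<alpha>"
proof -
  have "\<forall>jk::2\<times>2. \<exists>C. \<forall>x\<in>cball p r. \<forall>y\<in>cball p r.
           cmod (E (fst jk) (snd jk) x - E (fst jk) (snd jk) y) \<le> C * dist x y powr \<alpha>"
    using assms unfolding hold_def by blast
  then have "\<exists>Cf. \<forall>jk::2\<times>2. \<forall>x\<in>cball p r. \<forall>y\<in>cball p r.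
           cmod (E (fst jk) (snd jk) x - E (fst jk) (snd jk) y) \<le> Cf jk * dist x y powr \<alpha>"
    by (rule choice)
  then obtain Cf where Cf: "\<And>jk. \<forall>x\<in>cball p r. \<forall>y\<in>cball p r.
           cmod (E (fst jk) (snd jk) x - E (fst jk) (snd jk) y) \<le> Cf jk * dist x y powr \<alpha>"
    by blast
  have le: "Cf jk \<le> (\<Sum>i\<in>UNIV. \<bar>Cf i\<bar>)" for jk
  proof -
    have "\<bar>Cf jk\<bar> \<le> (\<Sum>i\<in>UNIV. \<bar>Cf i\<bar>)"
      by (rule member_le_sum) auto
    then show ?thesis by linarith
  qed
  show ?thesis
  proof (intro exI allI ballI)
    fix j k x y assume xy: "(x::complex^2) \<in> cball p r" "y \<in> cball p r"
    have "cmod (E j k x - E j k y) \<le> Cf (j,k) * dist x y powr \<alpha>" using Cf[of "(j,k)"] xy by simp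
    also have "\<dots> \<le> (\<Sum>i\<in>UNIV. \<bar>Cf i\<bar>) * dist x y powr \<alpha>"
      using le by (intro mult_right_mono) auto
    finally show "cmod (E j k x - E j k y) \<le> (\<Sum>i\<in>UNIV. \<bar>Cf i\<bar>) * dist x y powr \<alpha>" .
  qed
qed

lemma omega_entries:
  fixes \<omega> \<eta> :: "complex^2 \<Rightarrow> complex^2^2" and F :: "complex^2 \<Rightarrow> real"
  defines "Fc \<equiv> (\<lambda>w. complex_of_real (F w))"
  assumes S: "open S" "smooth_on S F" and x: "x \<in> S" "x $ 1 \<noteq> 0"
    and om: "\<omega> x = \<eta> x + ddbar_coeff (\<lambda>w. complex_of_real (F w * cmod (w $ 1) powr (2 * \<beta>))) x"
  shows "\<omega> x $1$1 = \<eta> x $1$1 + (Fc x * of_real (\<beta>^2 * cmod (x$1) powr (2*(\<beta>-1)))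
        + of_real (\<beta> * cmod (x$1) powr (2*(\<beta>-1))) * x$1 * dz 1 Fc x
        + (of_real (cmod (x$1) powr (2*\<beta>)) * dz 1 (dzbar 1 Fc) x + dzbar 1 Fc x * (of_real (\<beta> * cmod (x$1) powr (2*(\<beta>-1))) * cnj (x$1))))"
    and "\<omega> x $1$2 = \<eta> x $1$2 + (of_real (cmod (x$1) powr (2*\<beta>)) * dz 1 (dzbar 2 Fc) x + dzbar 2 Fc x * (of_real (\<beta> * cmod (x$1) powr (2*(\<beta>-1))) * cnj (x$1)))"
    and "\<omega> x $2$1 = \<eta> x $2$1 + (of_real (\<beta> * cmod (x$1) powr (2*(\<beta>-1))) * x$1 * dz 2 Fc x + of_real (cmod (x$1) powr (2*\<beta>)) * dz 2 (dzbar 1 Fc) x)"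
    and "\<omega> x $2$2 = \<eta> x $2$2 + of_real (cmod (x$1) powr (2*\<beta>)) * dz 2 (dzbar 2 Fc) x"
proof -
  have sF: "smooth_on S Fc" unfolding Fc_def using smooth_linear[OF S(1) bounded_linear_of_real S(2)] .
  have u: "(\<lambda>w. complex_of_real (F w * cmod (w $ 1) powr (2 * \<beta>))) = (\<lambda>w. Fc w * Gc \<beta> w)"
    unfolding Fc_def Gc_def by auto
  have om': "\<omega> x $ j $ k = \<eta> x $ j $ k + (Fc x * dz j (dzbar k (Gc \<beta>)) x + dzbar k (Gc \<beta>) x * dz j Fc x
     + (Gc \<beta> x * dz j (dzbar k Fc) x + dzbar k Fc x * dz j (Gc \<beta>) x))" for j k
    using ddbar_u[OF S(1) sF x] unfolding om u ddbar_coeff_def by simp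
  note vals = dz_dzbar_G11[OF x(2)] dz_dzbar_G21[OF x(2)] dz_dzbar_G2[OF x(2)] dzbar_G1_K[OF x(2)]
    dz_G1[OF x(2)] dz_G2[OF x(2)] dzbar_G2[OF x(2)] K1_def qq_powr
  have Gx: "Gc \<beta> x = complex_of_real (cmod (x$1) powr (2*\<beta>))" by (simp add: Gc_def)
  show "\<omega> x $1$1 = \<eta> x $1$1 + (Fc x * of_real (\<beta>^2 * cmod (x$1) powr (2*(\<beta>-1)))
        + of_real (\<beta> * cmod (x$1) powr (2*(\<beta>-1))) * x$1 * dz 1 Fc x
        + (of_real (cmod (x$1) powr (2*\<beta>)) * dz 1 (dzbar 1 Fc) x + dzbar 1 Fc x * (of_real (\<beta> * cmod (x$1) powr (2*(\<beta>-1))) * cnj (x$1))))"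
    using om'[of 1 1] by (simp add: vals Gx)
  show "\<omega> x $1$2 = \<eta> x $1$2 + (of_real (cmod (x$1) powr (2*\<beta>)) * dz 1 (dzbar 2 Fc) x + dzbar 2 Fc x * (of_real (\<beta> * cmod (x$1) powr (2*(\<beta>-1))) * cnj (x$1)))"
    using om'[of 1 2] by (simp add: vals Gx)
  show "\<omega> x $2$1 = \<eta> x $2$1 + (of_real (\<beta> * cmod (x$1) powr (2*(\<beta>-1))) * x$1 * dz 2 Fc x + of_real (cmod (x$1) powr (2*\<beta>)) * dz 2 (dzbar 1 Fc) x)"
    using om'[of 2 1] by (simp add: vals Gx)
  show "\<omega> x $2$2 = \<eta> x $2$2 + of_real (cmod (x$1) powr (2*\<beta>)) * dz 2 (dzbar 2 Fc) x"
    using om'[of 2 2] by (simp add: vals Gx)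
qed

theorem lemma3p6:
  fixes \<beta> R :: real
    and \<omega> \<eta> :: "complex^2 \<Rightarrow> complex^2^2"
    and F :: "complex^2 \<Rightarrow> real"
  assumes "0 < \<beta>" "\<beta> < 1" "0 < R"
    and "smooth_kaehler_on (ball 0 R - {z. z $ 1 = 0}) \<omega>"
    and "smooth_real_11_form_on (ball 0 R) \<eta>"
    and "\<forall>z\<in>ball 0 R. z $ 1 = 0 \<longrightarrow> Re (\<eta> z $ 2 $ 2) > 0"
    and "smooth_on (ball 0 R) F"
    and "\<forall>z\<in>ball 0 R. F z > 0"
    and "\<forall>z\<in>ball 0 R - {z. z $ 1 = 0}.
           \<omega> z = \<eta> z + ddbar_coeff (\<lambda>w. complex_of_real (F w * cmod (w $ 1) powr (2 * \<beta>))) z"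
  shows "standard_cone_near \<beta> \<omega> 0"
proof -
  define S where "S = ball (0::complex^2) R"
  define Fc where "Fc = (\<lambda>w. complex_of_real (F w))"
  have oS: "open S" unfolding S_def by simp
  have sF: "smooth_on S Fc" unfolding Fc_def S_def
    using smooth_linear[OF _ bounded_linear_of_real assms(7)] by simp
  have sEta: "smooth_on S (\<lambda>z. \<eta> z $ j $ k)" for j k
    using assms(5) unfolding smooth_real_11_form_on_def S_def by blast
  have herm: "\<forall>z\<in>S. \<forall>j k. \<eta> z $ k $ j = cnj (\<eta> z $ j $ k)"
    using assms(5) unfolding smooth_real_11_form_on_def S_def by blast
  define \<alpha> where "\<alpha> = min \<beta> (1 - \<beta>)"
  have \<alpha>: "0 < \<alpha>" "\<alpha> < 1" "\<alpha> \<le> \<beta>" "\<alpha> \<le> 1 - \<beta>" "\<alpha> \<le> 1"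
    unfolding \<alpha>_def using assms(1,2) by auto
  show ?thesis
    unfolding standard_cone_near_def
  proof (intro exI[of _ "ball 0 (R/2)"] conjI ballI impI)
    show "open (ball (0::complex^2) (R/2))" by simp
    show "(0::complex^2) \<in> ball 0 (R/2)" using assms(3) by simp
    fix p :: "complex^2" assume p: "p \<in> ball 0 (R/2)" "p $ 1 = 0"
    define r where "r = R/4"
    have r: "0 < r" unfolding r_def using assms(3) by simp
    have cb: "cball p r \<subseteq> S"
    proof
      fix x assume "x \<in> cball p r"
      then have "dist p x \<le> r" by simp
      moreover have "norm p < R/2" using p by simp
      moreover have "norm x \<le> norm p + norm (x - p)" using norm_triangle_ineq[of p "x - p"] by simp
      moreover have "norm (x - p) = dist p x" by (simp add: dist_norm norm_minus_commute)
      ultimately have "norm x < R" unfolding r_def using assms(3) by linarith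
      then show "x \<in> S" unfolding S_def by simp
    qed
    have pS: "p \<in> S" using cb r by auto
    have Fp: "0 < F p" using assms(8) pS unfolding S_def by blast
    define a where "a = F p powr (1 / (2*\<beta>))"
    have a: "0 < a" unfolding a_def using Fp by simp
    have apow: "a powr (2*\<beta>) = F p" unfolding a_def using Fp assms(1) by (simp add: powr_powr)
    have eta22: "Im (\<eta> p $ 2 $ 2) = 0"
      using herm pS by (metis cnj.simps(2) neg_equal_zero)
    have eta22pos: "0 < Re (\<eta> p $ 2 $ 2)" using assms(6) pS p(2) unfolding S_def by blast
    define b where "b = sqrt (Re (\<eta> p $ 2 $ 2))"
    have b: "0 < b" unfolding b_def using eta22pos by simp
    have bb: "\<eta> p $ 2 $ 2 = complex_of_real (b * b)"
      unfolding b_def using eta22pos eta22 by (simp add: complex_eq_iff)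
    define K where "K = 1 / (a powr \<beta> * b)"
    define hF where "hF = (\<lambda>x::complex^2. complex_of_real (cmod (x$1) powr (1-\<beta>)))"
    define sB where "sB = (\<lambda>x::complex^2. complex_of_real (cmod (x$1) powr \<beta>))"
    define sA where "sA = (\<lambda>x::complex^2. complex_of_real (cmod (x$1)))"
    define wf where "wf = (\<lambda>x::complex^2. x$1 * complex_of_real (cmod (x$1) powr (\<beta> - 1)))"
    define cwf where "cwf = (\<lambda>x::complex^2. cnj (x$1) * complex_of_real (cmod (x$1) powr (\<beta> - 1)))"
    define z1 where "z1 = (\<lambda>x::complex^2. x$1)"
    define cz1 where "cz1 = (\<lambda>x::complex^2. cnj (x$1))"
    define E11 where "E11 = (\<lambda>x. (\<eta> x $1$1 * hF x * hF x + Fc x * of_real (\<beta>^2) + of_real \<beta> * z1 x * dz 1 Fc x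
       + sA x * sA x * dz 1 (dzbar 1 Fc) x + of_real \<beta> * cz1 x * dzbar 1 Fc x) / of_real (F p) - of_real (\<beta>^2))"
    define E12 where "E12 = (\<lambda>x. (\<eta> x $1$2 * hF x + sA x * sB x * dz 1 (dzbar 2 Fc) x
       + of_real \<beta> * dzbar 2 Fc x * cwf x) * of_real K)"
    define E21 where "E21 = (\<lambda>x. (\<eta> x $2$1 * hF x + sA x * sB x * dz 2 (dzbar 1 Fc) x
       + of_real \<beta> * dz 2 Fc x * wf x) * of_real K)"
    define E22 where "E22 = (\<lambda>x. (\<eta> x $2$2 + sB x * sB x * dz 2 (dzbar 2 Fc) x) / of_real (b * b) - 1)"
    define E where "E = (\<lambda>(j::2) (k::2). if j = 1 then (if k = 1 then E11 else E12) else (if k = 1 then E21 else E22))"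
    have l1: "hold p r \<alpha> (\<lambda>x. \<eta> x $ j $ k)" for j k
      using hold_smooth[OF \<alpha>(1,5) r oS cb sEta] .
    have l2: "hold p r \<alpha> Fc" "hold p r \<alpha> (dz j Fc)" "hold p r \<alpha> (dzbar k Fc)" "hold p r \<alpha> (dz j (dzbar k Fc))"
      for j k
      using hold_smooth[OF \<alpha>(1,5) r oS cb] sF smooth_dz[OF oS] smooth_dzbar[OF oS] by blast+
    have l3: "hold p r \<alpha> hF" "hold p r \<alpha> sB" "hold p r \<alpha> sA" "hold p r \<alpha> wf" "hold p r \<alpha> cwf"
       "hold p r \<alpha> z1" "hold p r \<alpha> cz1"
      unfolding hF_def sB_def sA_def wf_def cwf_def z1_def cz1_def
      using hold_s[OF \<alpha>(1,4) _ r] hold_s[OF \<alpha>(1,3) _ r] hold_abs1[OF \<alpha>(1,5) r]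
        hold_w[OF \<alpha>(1,3) assms(2) r] hold_cw[OF \<alpha>(1,3) assms(2) r]
        hold_z1[OF \<alpha>(1,5) r] hold_cz1[OF \<alpha>(1,5) r] assms(1,2) by auto
    have hE: "\<forall>j k. hold p r \<alpha> (E j k)"
    proof (intro allI)
      fix j k :: 2
      have "hold p r \<alpha> E11" unfolding E11_def
        by (intro hold_diff hold_divc hold_add hold_mult hold_const l1 l2 l3)
      moreover have "hold p r \<alpha> E12" unfolding E12_def
        by (intro hold_diff hold_divc hold_add hold_mult hold_const l1 l2 l3)
      moreover have "hold p r \<alpha> E21" unfolding E21_def
        by (intro hold_diff hold_divc hold_add hold_mult hold_const l1 l2 l3)
      moreover have "hold p r \<alpha> E22" unfolding E22_def
        by (intro hold_diff hold_divc hold_add hold_mult hold_const l1 l2 l3)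
      ultimately show "hold p r \<alpha> (E j k)" unfolding E_def by auto
    qed
    have Ep: "E j k p = 0" for j k
    proof -
      have z: "hF p = 0" "sB p = 0" "sA p = 0" "wf p = 0" "cwf p = 0" "z1 p = 0" "cz1 p = 0"
        unfolding hF_def sB_def sA_def wf_def cwf_def z1_def cz1_def using p(2) by auto
      have "E11 p = 0" unfolding E11_def z Fc_def using Fp by simp
      moreover have "E12 p = 0" unfolding E12_def z by simp
      moreover have "E21 p = 0" unfolding E21_def z by simp
      moreover have "E22 p = 0" unfolding E22_def z bb using b by simp
      ultimately show ?thesis unfolding E_def by auto
    qed
    define T where "T = ball p r - {z. z $ 1 = 0}"
    have TK: "T \<subseteq> cball p r" unfolding T_def by auto
    have sig: "cone_sigma_coeff \<beta> a b \<omega> j k x = E j k x" if x: "x \<in> T" for j k x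
    proof -
      have xS: "x \<in> S" and x1: "x $ 1 \<noteq> 0" using x TK cb unfolding T_def by auto
      have om: "\<omega> x = \<eta> x + ddbar_coeff (\<lambda>w. complex_of_real (F w * cmod (w $ 1) powr (2 * \<beta>))) x"
        using assms(9) xS x1 unfolding S_def by blast
      note H = omega_entries[where \<omega>=\<omega> and \<eta>=\<eta> and \<beta>=\<beta> and x=x, OF oS assms(7)[folded S_def] xS x1 om, folded Fc_def]
      have Fcx: "Fc x = complex_of_real (F x)" unfolding Fc_def ..
      note H' = H[unfolded Fcx[symmetric]]
      have "cone_sigma_coeff \<beta> a b \<omega> 1 1 x = E11 x"
        unfolding E11_def hF_def sA_def z1_def cz1_def by (rule sig11[where \<omega>=\<omega> and Fc=Fc and x=x and \<beta>=\<beta>, OF a x1 apow H'(1)])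
      moreover have "cone_sigma_coeff \<beta> a b \<omega> 1 2 x = E12 x"
        unfolding E12_def hF_def sA_def sB_def cwf_def K_def by (rule sig12[where \<omega>=\<omega> and x=x and \<beta>=\<beta>, OF a b x1 apow H'(2)])
      moreover have "cone_sigma_coeff \<beta> a b \<omega> 2 1 x = E21 x"
        unfolding E21_def hF_def sA_def sB_def wf_def K_def by (rule sig21[where \<omega>=\<omega> and x=x and \<beta>=\<beta>, OF a b x1 apow H'(3)])
      moreover have "cone_sigma_coeff \<beta> a b \<omega> 2 2 x = E22 x"
        unfolding E22_def sB_def by (rule sig22[where \<omega>=\<omega> and x=x and \<beta>=\<beta>, OF a b x1 apow H'(4)])
      ultimately show ?thesis unfolding E_def using exhaust_2[of j] exhaust_2[of k] by auto
    qed
    obtain C where C: "\<forall>j k. \<forall>x\<in>cball p r. \<forall>y\<in>cball p r. cmod (E j k x - E j k y) \<le> C * dist x y powr \<alpha>"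
      using hold_uniform[OF hE] by blast
    have main: "\<forall>j k. (\<forall>x\<in>ball p r - {z. z $ 1 = 0}. \<forall>y\<in>ball p r - {z. z $ 1 = 0}.
          cmod (cone_sigma_coeff \<beta> a b \<omega> j k x - cone_sigma_coeff \<beta> a b \<omega> j k y) \<le> C * dist x y powr \<alpha>) \<and>
        (cone_sigma_coeff \<beta> a b \<omega> j k \<longlongrightarrow> 0) (at p within (ball p r - {z. z $ 1 = 0}))"
    proof (intro allI conjI)
      fix j k :: 2
      show "\<forall>x\<in>ball p r - {z. z $ 1 = 0}. \<forall>y\<in>ball p r - {z. z $ 1 = 0}.
          cmod (cone_sigma_coeff \<beta> a b \<omega> j k x - cone_sigma_coeff \<beta> a b \<omega> j k y) \<le> C * dist x y powr \<alpha>"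
      proof (intro ballI)
        fix x y assume xy: "x \<in> ball p r - {z. z $ 1 = 0}" "y \<in> ball p r - {z. z $ 1 = 0}"
        then have xT: "x \<in> T" and yT: "y \<in> T" unfolding T_def by auto
        then have "x \<in> cball p r" "y \<in> cball p r" using TK by auto
        then have "cmod (E j k x - E j k y) \<le> C * dist x y powr \<alpha>" using C by blast
        then show "cmod (cone_sigma_coeff \<beta> a b \<omega> j k x - cone_sigma_coeff \<beta> a b \<omega> j k y) \<le> C * dist x y powr \<alpha>"
          using sig[OF xT] sig[OF yT] by simp
      qed
      have lim: "(E j k \<longlongrightarrow> 0) (at p within T)"
        using hold_tendsto[OF hE[rule_format] \<alpha>(1) Ep TK] .
      have ev: "\<forall>\<^sub>F x in at p within T. cone_sigma_coeff \<beta> a b \<omega> j k x = E j k x"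
        unfolding eventually_at_filter by (rule always_eventually) (use sig in auto)
      show "(cone_sigma_coeff \<beta> a b \<omega> j k \<longlongrightarrow> 0) (at p within (ball p r - {z. z $ 1 = 0}))"
        using tendsto_cong[OF ev] lim unfolding T_def by simp
    qed
    show "standard_cone_at \<beta> \<omega> p"
      unfolding standard_cone_at_def using a b r \<alpha>(1,2) main by blast
  qed
qed

end
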